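(* Let $\mathbb{X}$ be a two-dimensional real Banach space. Then for any $x \in S_{\mathbb{X}}$ and any $\epsilon \in [0,1)$, there exists a normal cone $K$ in $\mathbb{X}$ such that $F(x,\epsilon) = K \cup (-K)$.
   Context: $S_{\mathbb{X}}=\{x\in\mathbb{X}:\|x\|=1\}$. For $x,y\in\mathbb{X}$ and $\epsilon\in[0,1)$, write $x \perp_D^{\epsilon} y$ if $\|x+\lambda y\| \geq \sqrt{1-\epsilon^2}\,\|x\|$ for all $\lambda\in\mathbb{R}$. Define $F(x,\epsilon)=\{y\in\mathbb{X} : x\perp_D^{\epsilon} y\}$. A subset $K\subseteq\mathbb{X}$ is a normal cone if (i) $K+K\subseteq K$, (ii) $\alpha K\subseteq K$ for all $\alpha\geq 0$, and (iii) $K\cap(-K)=\{0\}$. *)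

theory Defs
  imports "HOL-Analysis.Analysis"
begin

definition approx_bj_orth :: "'a::real_normed_vector \<Rightarrow> real \<Rightarrow> 'a \<Rightarrow> bool" where
  "approx_bj_orth x \<epsilon> y \<longleftrightarrow> (\<forall>t::real. norm (x + t *\<^sub>R y) \<ge> sqrt (1 - \<epsilon>\<^sup>2) * norm x)"

definition F_set :: "'a::real_normed_vector \<Rightarrow> real \<Rightarrow> 'a set" where
  "F_set x \<epsilon> = {y. approx_bj_orth x \<epsilon> y}"

definition normal_cone :: "'a::real_vector set \<Rightarrow> bool" where
  "normal_cone K \<longleftrightarrow>
     (\<forall>u\<in>K. \<forall>v\<in>K. u + v \<in> K) \<and>
     (\<forall>\<alpha>::real. \<forall>u\<in>K. \<alpha> \<ge> 0 \<longrightarrow> \<alpha> *\<^sub>R u \<in> K) \<and>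
     K \<inter> uminus ` K = {0}"

end

theory Submission
  imports Defs
begin

lemma key_step:
  fixes x w y1 y2 :: "'a::real_normed_vector"
  assumes y1: "y1 = a1 *\<^sub>R x + b1 *\<^sub>R w" and y2: "y2 = a2 *\<^sub>R x + b2 *\<^sub>R w"
    and b1: "b1 > 0" and b2: "b2 > 0" and D: "t * (a2*b1 - a1*b2) \<ge> 0"
  shows "\<exists>t'. norm (x + t' *\<^sub>R y1) \<le> norm (x + t *\<^sub>R (y1 + y2))"
proof -
  define q where "q = 1 + t * (a2*b1 - a1*b2) / b1"
  have q1: "q \<ge> 1" unfolding q_def using D b1 by simp
  define s where "s = 1 / q"
  have s0: "s > 0" and s1: "s \<le> 1" using q1 unfolding s_def by auto
  define t' where "t' = s * t * (b1 + b2) / b1"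
  have e1: "x + t' *\<^sub>R y1 = (1 + t'*a1) *\<^sub>R x + (t'*b1) *\<^sub>R w"
    unfolding y1 by (simp add: algebra_simps)
  have e2: "s *\<^sub>R (x + t *\<^sub>R (y1 + y2)) = (s*(1+t*(a1+a2))) *\<^sub>R x + (s*t*(b1+b2)) *\<^sub>R w"
    unfolding y1 y2 by (simp add: algebra_simps)
  have sq: "s * q = 1" unfolding s_def using q1 by simp
  have c1: "1 + t'*a1 = s*(1+t*(a1+a2))"
  proof -
    have "s*(1+t*(a1+a2)) - (1 + t'*a1) = s * q - 1"
      unfolding t'_def q_def using b1 by (simp add: field_simps)
    thus ?thesis using sq by simp
  qed
  have c2: "t'*b1 = s*t*(b1+b2)" unfolding t'_def using b1 by simp
  have "x + t' *\<^sub>R y1 = s *\<^sub>R (x + t *\<^sub>R (y1 + y2))" using e1 e2 c1 c2 by simp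
  hence "norm (x + t' *\<^sub>R y1) = s * norm (x + t *\<^sub>R (y1 + y2))" using s0 by simp
  also have "\<dots> \<le> norm (x + t *\<^sub>R (y1 + y2))"
    using s1 s0 by (simp add: mult_left_le_one_le)
  finally show ?thesis by blast
qed

theorem theorem2p1:
  fixes x :: "'a::banach" and \<epsilon> :: real
  assumes "dim (UNIV :: 'a set) = 2"
    and "norm x = 1"
    and "0 \<le> \<epsilon>" and "\<epsilon> < 1"
  shows "\<exists>K. normal_cone K \<and> F_set x \<epsilon> = K \<union> uminus ` K"
proof -
  define \<delta> where "\<delta> = sqrt (1 - \<epsilon>\<^sup>2)"
  have e2: "\<epsilon>\<^sup>2 < 1" using power_strict_mono[of \<epsilon> 1 2] assms(3,4) by simp
  have \<delta>0: "\<delta> > 0" unfolding \<delta>_def using e2 by simp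
  have \<delta>1: "\<delta> \<le> 1" unfolding \<delta>_def by simp
  have x0: "x \<noteq> 0" using assms(2) by auto
  have indx: "independent {x}"
    by (rule independent_insertI) (auto simp: span_empty x0 independent_empty)
  obtain B where xB: "{x} \<subseteq> B" and "B \<subseteq> UNIV" and indB: "independent B" and spB: "UNIV \<subseteq> span B"
    by (rule maximal_independent_subset_extend[OF subset_UNIV indx])
  have sB: "span B = span (UNIV :: 'a set)" using spB by (metis span_UNIV top.extremum_uniqueI)
  have "card B = 2" using dim_eq_card[OF sB indB] assms(1) by linarith
  then obtain u v where uv: "B = {u, v}" "u \<noteq> v" by (auto simp: card_2_iff)
  have "\<exists>w. B = {x, w} \<and> x \<noteq> w"
  proof (cases "x = u")
    case True then show ?thesis using uv by blast
  next
    case False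
    hence "x = v" using xB uv by auto
    then show ?thesis using uv by blast
  qed
  then obtain w where Bw: "B = {x, w}" and xw: "x \<noteq> w" by blast
  have "independent (insert x {w})" using indB Bw by simp
  hence "(if x \<in> {w} then independent {w} else independent {w} \<and> x \<notin> span {w})"
    by (subst (asm) independent_insert)
  moreover have "x \<notin> {w}" using xw by simp
  ultimately have xnw: "x \<notin> span {w}" by argo
  have w0: "w \<noteq> 0"
  proof
    assume "w = 0"
    hence "0 \<in> B" using Bw by simp
    thus False using indB dependent_zero by blast
  qed
  have ex: "\<exists>a b. y = a *\<^sub>R x + b *\<^sub>R w" for y
  proof -
    have "y \<in> span {x, w}" using spB Bw by auto
    then obtain k where "y - k *\<^sub>R x \<in> span {w}" by (auto simp: span_breakdown_eq)
    then obtain m where "y - k *\<^sub>R x = m *\<^sub>R w" by (auto simp: span_singleton)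
    hence "y = k *\<^sub>R x + m *\<^sub>R w" by (simp add: algebra_simps)
    thus ?thesis by blast
  qed
  have uniq: "a = a' \<and> b = b'" if "a *\<^sub>R x + b *\<^sub>R w = a' *\<^sub>R x + b' *\<^sub>R w" for a b a' b'
  proof -
    have h: "(a - a') *\<^sub>R x = (b' - b) *\<^sub>R w" using that by (simp add: algebra_simps)
    have "a = a'"
    proof (rule ccontr)
      assume "a \<noteq> a'"
      hence "x = inverse (a - a') *\<^sub>R ((a - a') *\<^sub>R x)" by simp
      also have "\<dots> = inverse (a - a') *\<^sub>R ((b' - b) *\<^sub>R w)" using h by simp
      finally have xe: "x = (inverse (a - a') * (b' - b)) *\<^sub>R w" by simp
      have "w \<in> span {w}" by (rule span_base) simp
      hence "(inverse (a - a') * (b' - b)) *\<^sub>R w \<in> span {w}" by (rule span_scale)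
      hence "x \<in> span {w}" using xe by simp
      thus False using xnw by simp
    qed
    moreover have "b = b'" using h \<open>a = a'\<close> w0 by simp
    ultimately show ?thesis by simp
  qed
  define ac where "ac y = (SOME a. \<exists>b. y = a *\<^sub>R x + b *\<^sub>R w)" for y
  define bc where "bc y = (SOME b. y = ac y *\<^sub>R x + b *\<^sub>R w)" for y
  have dec: "y = ac y *\<^sub>R x + bc y *\<^sub>R w" for y
  proof -
    have "\<exists>b. y = ac y *\<^sub>R x + b *\<^sub>R w" unfolding ac_def using ex[of y] by (rule someI_ex)
    thus ?thesis unfolding bc_def by (rule someI_ex)
  qed
  have bc_eq: "bc y = b" if "y = a *\<^sub>R x + b *\<^sub>R w" for y a b
  proof -
    have "ac y *\<^sub>R x + bc y *\<^sub>R w = a *\<^sub>R x + b *\<^sub>R w" using dec[of y] that by simp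
    thus ?thesis using uniq by blast
  qed
  have Fdef: "y \<in> F_set x \<epsilon> \<longleftrightarrow> (\<forall>t. norm (x + t *\<^sub>R y) \<ge> \<delta>)" for y
    unfolding F_set_def approx_bj_orth_def \<delta>_def using assms(2) by simp
  have Fneg: "- y \<in> F_set x \<epsilon>" if "y \<in> F_set x \<epsilon>" for y
    unfolding Fdef
  proof
    fix t
    have "norm (x + (- t) *\<^sub>R y) \<ge> \<delta>" using that Fdef by blast
    thus "norm (x + t *\<^sub>R (- y)) \<ge> \<delta>" by simp
  qed
  have Fscale: "c *\<^sub>R y \<in> F_set x \<epsilon>" if "y \<in> F_set x \<epsilon>" for y c
    unfolding Fdef
  proof
    fix t
    have "norm (x + (t * c) *\<^sub>R y) \<ge> \<delta>" using that Fdef by blast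
    thus "norm (x + t *\<^sub>R (c *\<^sub>R y)) \<ge> \<delta>" by simp
  qed
  have F0: "0 \<in> F_set x \<epsilon>" unfolding Fdef using assms(2) \<delta>1 by simp
  have Fline: "y = 0" if "y \<in> F_set x \<epsilon>" "bc y = 0" for y
  proof -
    have yy: "y = ac y *\<^sub>R x" using dec[of y] that(2) by simp
    show ?thesis
    proof (rule ccontr)
      assume "y \<noteq> 0"
      hence a0: "ac y \<noteq> 0" using yy by auto
      have "norm (x + (- 1 / ac y) *\<^sub>R y) \<ge> \<delta>" using that(1) Fdef by blast
      moreover have "x + (- 1 / ac y) *\<^sub>R y = 0" using a0 by (subst yy) simp
      ultimately show False using \<delta>0 by simp
    qed
  qed
  define K where "K = {y \<in> F_set x \<epsilon>. bc y \<ge> 0}"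
  have bc_scale: "bc (c *\<^sub>R y) = c * bc y" for c y
    by (rule bc_eq[of _ "c * ac y"]) (subst dec[of y], simp add: algebra_simps)
  have bc_add: "bc (y + z) = bc y + bc z" for y z
    by (rule bc_eq[of _ "ac y + ac z"]) (subst dec[of y], subst dec[of z], simp add: algebra_simps)
  have bc_neg: "bc (- y) = - bc y" for y
    using bc_scale[of "-1" y] by simp
  have Kadd: "y + z \<in> K" if "y \<in> K" "z \<in> K" for y z
  proof -
    have yF: "y \<in> F_set x \<epsilon>" and zF: "z \<in> F_set x \<epsilon>" and hby: "bc y \<ge> 0" and bz: "bc z \<ge> 0"
      using that unfolding K_def by auto
    have sumF: "y + z \<in> F_set x \<epsilon>"
    proof (cases "bc y = 0 \<or> bc z = 0")
      case True
      then show ?thesis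
      proof
        assume "bc y = 0" hence "y = 0" using Fline yF by blast
        thus ?thesis using zF by simp
      next
        assume "bc z = 0" hence "z = 0" using Fline zF by blast
        thus ?thesis using yF by simp
      qed
    next
      case False
      hence b1: "bc y > 0" and b2: "bc z > 0" using hby bz by auto
      show ?thesis unfolding Fdef
      proof
        fix t
        show "norm (x + t *\<^sub>R (y + z)) \<ge> \<delta>"
        proof (cases "t * (ac z * bc y - ac y * bc z) \<ge> 0")
          case True
          then obtain t' where "norm (x + t' *\<^sub>R y) \<le> norm (x + t *\<^sub>R (y + z))"
            using key_step[OF dec[of y] dec[of z] b1 b2] by blast
          moreover have "norm (x + t' *\<^sub>R y) \<ge> \<delta>" using yF Fdef by blast
          ultimately show ?thesis by linarith
        next
          case False
          hence "t * (ac y * bc z - ac z * bc y) \<ge> 0" by (simp add: algebra_simps)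
          then obtain t' where "norm (x + t' *\<^sub>R z) \<le> norm (x + t *\<^sub>R (z + y))"
            using key_step[OF dec[of z] dec[of y] b2 b1] by blast
          moreover have "norm (x + t' *\<^sub>R z) \<ge> \<delta>" using zF Fdef by blast
          ultimately show ?thesis by (simp add: add.commute)
        qed
      qed
    qed
    show ?thesis unfolding K_def using sumF bc_add hby bz by simp
  qed
  have nc: "normal_cone K"
    unfolding normal_cone_def
  proof (intro conjI ballI allI impI)
    show "u + v \<in> K" if "u \<in> K" "v \<in> K" for u v using Kadd that by blast
    show "\<alpha> *\<^sub>R u \<in> K" if "u \<in> K" "\<alpha> \<ge> 0" for u \<alpha>
      using that Fscale bc_scale unfolding K_def by simp
    show "K \<inter> uminus ` K = {0}"
    proof
      show "K \<inter> uminus ` K \<subseteq> {0}"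
      proof
        fix y assume "y \<in> K \<inter> uminus ` K"
        then obtain z where "y \<in> K" "z \<in> K" "y = - z" by auto
        hence "bc y = 0" "y \<in> F_set x \<epsilon>" using bc_neg unfolding K_def by force+
        thus "y \<in> {0}" using Fline by simp
      qed
      have "0 \<in> K" unfolding K_def using F0 bc_scale[of 0 0] by simp
      thus "{0} \<subseteq> K \<inter> uminus ` K" by (auto intro: image_eqI[of 0 _ 0])
    qed
  qed
  have "F_set x \<epsilon> = K \<union> uminus ` K"
  proof
    show "F_set x \<epsilon> \<subseteq> K \<union> uminus ` K"
    proof
      fix y assume yF: "y \<in> F_set x \<epsilon>"
      show "y \<in> K \<union> uminus ` K"
      proof (cases "bc y \<ge> 0")
        case True then show ?thesis using yF unfolding K_def by simp
      next
        case False
        hence "- y \<in> K" using Fneg[OF yF] bc_neg unfolding K_def by simp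
        hence "- (- y) \<in> uminus ` K" by blast
        thus ?thesis by simp
      qed
    qed
    show "K \<union> uminus ` K \<subseteq> F_set x \<epsilon>" unfolding K_def using Fneg by auto
  qed
  thus ?thesis using nc by blast
qed

end
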